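(* Let $A$ be a totally ordered alphabet, $F(A)$ the free group on $A$, and $\ell\in A$. If $g\in F(A)$ is a palindrome, then $\lambda_\ell(g)\ell$ is a palindrome and $\ell\rho_\ell(g)$ is a palindrome.
   Context: The reversal $g\mapsto\tilde g$ is the unique anti-automorphism of $F(A)$ with $\tilde a=a$ for all $a\in A$; a palindrome is an element $g$ with $\tilde g=g$. For $\ell\in A$, $\lambda_\ell$ and $\rho_\ell$ are the automorphisms of $F(A)$ defined on letters $a\in A$ by: $\lambda_\ell(a)=a\ell^{-1}$ if $a<\ell$, $\lambda_\ell(\ell)=\ell$, $\lambda_\ell(a)=\ell a$ if $a>\ell$; and $\rho_\ell(a)=a\ell$ if $a<\ell$, $\rho_\ell(\ell)=\ell$, $\rho_\ell(a)=\ell^{-1}a$ if $a>\ell$. *)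

theory Defs
  imports Main
begin

text \<open>Free group F(A) on a totally ordered alphabet A (here the type 'a :: linorder),
  represented by freely reduced words. A letter (True, a) stands for a, (False, a) for a^-1.\<close>

type_synonym 'a letter = "bool \<times> 'a"

definition cancels :: "'a letter \<Rightarrow> 'a letter \<Rightarrow> bool" where
  "cancels x y \<longleftrightarrow> snd x = snd y \<and> fst x \<noteq> fst y"

fun reduced :: "'a letter list \<Rightarrow> bool" where
  "reduced [] = True"
| "reduced [x] = True"
| "reduced (x # y # ys) = (\<not> cancels x y \<and> reduced (y # ys))"

definition reduce :: "'a letter list \<Rightarrow> 'a letter list" where
  "reduce w = foldr (\<lambda>x acc. case acc of [] \<Rightarrow> [x]
                              | y # ys \<Rightarrow> (if cancels x y then ys else x # acc)) w []"

definition fg_mult :: "'a letter list \<Rightarrow> 'a letter list \<Rightarrow> 'a letter list" where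
  "fg_mult u v = reduce (u @ v)"

definition fg_inv :: "'a letter list \<Rightarrow> 'a letter list" where
  "fg_inv w = map (\<lambda>(b, a). (\<not> b, a)) (rev w)"

definition gen :: "'a \<Rightarrow> 'a letter list" where
  "gen a = [(True, a)]"

definition extend_hom :: "('a \<Rightarrow> 'a letter list) \<Rightarrow> 'a letter list \<Rightarrow> 'a letter list" where
  "extend_hom f w = reduce (concat (map (\<lambda>(b, a). if b then f a else fg_inv (f a)) w))"

text \<open>Reversal: the anti-automorphism fixing each letter of A.\<close>
definition reversal :: "'a letter list \<Rightarrow> 'a letter list" where
  "reversal w = rev w"

definition palindrome :: "'a letter list \<Rightarrow> bool" where
  "palindrome g \<longleftrightarrow> reversal g = g"

definition lambda_letter :: "'a::linorder \<Rightarrow> 'a \<Rightarrow> 'a letter list" where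
  "lambda_letter l a = (if a < l then fg_mult (gen a) (fg_inv (gen l))
                        else if a = l then gen l else fg_mult (gen l) (gen a))"

definition rho_letter :: "'a::linorder \<Rightarrow> 'a \<Rightarrow> 'a letter list" where
  "rho_letter l a = (if a < l then fg_mult (gen a) (gen l)
                     else if a = l then gen l else fg_mult (fg_inv (gen l)) (gen a))"

definition lambda_aut :: "'a::linorder \<Rightarrow> 'a letter list \<Rightarrow> 'a letter list" where
  "lambda_aut l = extend_hom (lambda_letter l)"

definition rho_aut :: "'a::linorder \<Rightarrow> 'a letter list \<Rightarrow> 'a letter list" where
  "rho_aut l = extend_hom (rho_letter l)"

end

theory Submission
  imports Defs
begin

lemma reduce_Nil[simp]: "reduce [] = []"
  by (simp add: reduce_def)

lemma reduce_Cons: "reduce (x # w) = (case reduce w of [] \<Rightarrow> [x]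
   | y # ys \<Rightarrow> (if cancels x y then ys else x # reduce w))"
  by (simp add: reduce_def split: list.splits)

lemma cancels_sym: "cancels x y \<Longrightarrow> cancels y x"
  by (auto simp: cancels_def)

lemma reduced_tl: "reduced (x # w) \<Longrightarrow> reduced w"
  by (cases w) auto

lemma reduced_reduce: "reduced (reduce w)"
proof (induction w)
  case Nil then show ?case by simp
next
  case (Cons x w)
  then show ?case
    by (auto simp: reduce_Cons split: list.splits dest: reduced_tl)
qed

lemma reduce_reduced: "reduced w \<Longrightarrow> reduce w = w"
  by (induction w rule: reduced.induct) (auto simp: reduce_Cons)

lemma reduce_idem[simp]: "reduce (reduce w) = reduce w"
  by (rule reduce_reduced[OF reduced_reduce])

lemma reduce_Cons_cong: "reduce w = reduce w' \<Longrightarrow> reduce (x # w) = reduce (x # w')"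
  by (simp only: reduce_Cons)

lemma reduce_append_right: "reduce (u @ v) = reduce (u @ reduce v)"
proof (induction u)
  case Nil then show ?case by simp
next
  case (Cons x u) then show ?case using reduce_Cons_cong[of "u @ v" "u @ reduce v" x] by simp
qed

lemma cancel_step:
  assumes "cancels x y" "reduced r"
  shows "reduce (x # y # r) = r"
proof -
  have rr: "reduce r = r" using assms(2) by (rule reduce_reduced)
  show ?thesis
  proof (cases r)
    case Nil then show ?thesis using assms by (simp add: reduce_Cons)
  next
    case (Cons z zs)
    show ?thesis
    proof (cases "cancels y z")
      case True
      then have "z = x" using assms(1) by (cases x; cases y; cases z) (auto simp: cancels_def)
      then show ?thesis using assms True Cons rr
        by (cases zs) (auto simp: reduce_Cons)
    next
      case False
      then show ?thesis using assms Cons rr by (simp add: reduce_Cons)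
    qed
  qed
qed

lemma cancel_lemma: "cancels x y \<Longrightarrow> reduce (x # y # q) = reduce q"
proof -
  assume c: "cancels x y"
  have "reduce (x # y # q) = reduce ([x, y] @ reduce q)"
    using reduce_append_right[of "[x,y]" q] by simp
  also have "\<dots> = reduce q" using cancel_step[OF c reduced_reduce] by simp
  finally show ?thesis .
qed

lemma reduce_append_left: "reduce (u @ v) = reduce (reduce u @ v)"
proof (induction u arbitrary: v)
  case Nil then show ?case by simp
next
  case (Cons x u)
  have "reduce ((x # u) @ v) = reduce (x # (u @ v))" by simp
  also have "\<dots> = reduce (x # reduce (u @ v))"
    using reduce_append_right[of "[x]" "u @ v"] by simp
  also have "\<dots> = reduce (x # reduce (reduce u @ v))" using Cons by simp
  also have "\<dots> = reduce (x # (reduce u @ v))"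
    using reduce_append_right[of "[x]" "reduce u @ v"] by simp
  also have "\<dots> = reduce (reduce (x # u) @ v)"
  proof (cases "reduce u")
    case Nil then show ?thesis by (simp add: reduce_Cons)
  next
    case (Cons y ys)
    show ?thesis
    proof (cases "cancels x y")
      case True
      have "reduce (x # u) = ys" using Cons True by (simp add: reduce_Cons)
      then show ?thesis using Cons True cancel_lemma[of x y "ys @ v"] by simp
    next
      case False
      have "reduce (x # u) = x # reduce u" using Cons False by (simp add: reduce_Cons)
      then show ?thesis by simp
    qed
  qed
  finally show ?case .
qed

lemma reduced_append: "reduced (xs @ y # ys) \<longleftrightarrow> reduced (xs @ [y]) \<and> reduced (y # ys)"
proof (induction xs)
  case Nil then show ?case by simp
next
  case (Cons x xs)
  then show ?case by (cases xs) auto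
qed

lemma reduced_rev: "reduced w \<Longrightarrow> reduced (rev w)"
proof (induction w)
  case Nil then show ?case by simp
next
  case (Cons x w)
  show ?case
  proof (cases w)
    case Nil then show ?thesis by simp
  next
    case (Cons y w')
    have r: "reduced (rev w)" using Cons.IH Cons.prems by (auto dest: reduced_tl)
    have "reduced [y, x]" using Cons.prems Cons by (auto dest: cancels_sym)
    then show ?thesis using r Cons reduced_append[of "rev w'" y "[x]"] by simp
  qed
qed

lemma reduce_rev: "reduce (rev w) = rev (reduce w)"
proof (induction w)
  case Nil then show ?case by simp
next
  case (Cons x w)
  have "reduce (rev (x # w)) = reduce (reduce (rev w) @ [x])"
    using reduce_append_left[of "rev w" "[x]"] by simp
  also have "\<dots> = reduce (rev (reduce w) @ [x])" using Cons by simp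
  also have "\<dots> = rev (reduce (x # w))"
  proof (cases "reduce w")
    case Nil then show ?thesis by (simp add: reduce_Cons)
  next
    case (Cons y ys)
    have rw: "reduced (y # ys)" using Cons reduced_reduce[of w] by simp
    show ?thesis
    proof (cases "cancels x y")
      case True
      have "reduce (rev ys @ [y, x]) = reduce (rev ys @ reduce [y, x])"
        by (rule reduce_append_right)
      also have "\<dots> = rev ys"
        using cancel_lemma[OF cancels_sym[OF True], of "[]"] reduced_rev[OF reduced_tl[OF rw]]
        by (simp add: reduce_reduced)
      finally show ?thesis using Cons True by (simp add: reduce_Cons)
    next
      case False
      have "reduced (x # y # ys)" using rw False by simp
      then have "reduced (rev (x # y # ys))" by (rule reduced_rev)
      then show ?thesis using Cons False by (simp add: reduce_Cons reduce_reduced)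
    qed
  qed
  finally show ?case .
qed

lemma induct_lam:
  assumes h: "\<And>x. reduce (L # rev (\<phi> x)) = reduce (\<phi> x @ [L])"
  shows "reduce (L # concat (map (rev \<circ> \<phi>) g)) = reduce (concat (map \<phi> g) @ [L])"
proof (induction g)
  case Nil then show ?case by simp
next
  case (Cons x g)
  let ?R = "concat (map (rev \<circ> \<phi>) g)" and ?Q = "concat (map \<phi> g)"
  have "reduce (L # concat (map (rev \<circ> \<phi>) (x # g))) = reduce ((L # rev (\<phi> x)) @ ?R)" by simp
  also have "\<dots> = reduce (reduce (L # rev (\<phi> x)) @ ?R)" by (rule reduce_append_left)
  also have "\<dots> = reduce (reduce (\<phi> x @ [L]) @ ?R)" by (simp add: h)
  also have "\<dots> = reduce (\<phi> x @ (L # ?R))" using reduce_append_left[of "\<phi> x @ [L]" ?R] by simp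
  also have "\<dots> = reduce (\<phi> x @ reduce (L # ?R))" by (rule reduce_append_right)
  also have "\<dots> = reduce (\<phi> x @ reduce (?Q @ [L]))" using Cons.IH by (simp only:)
  also have "\<dots> = reduce (concat (map \<phi> (x # g)) @ [L])"
    using reduce_append_right[of "\<phi> x" "?Q @ [L]"] by simp
  finally show ?case .
qed

lemma induct_rho:
  assumes h: "\<And>x. reduce (rev (\<phi> x) @ [L]) = reduce (L # \<phi> x)"
  shows "reduce (concat (map (rev \<circ> \<phi>) g) @ [L]) = reduce (L # concat (map \<phi> g))"
proof (induction g rule: rev_induct)
  case Nil then show ?case by simp
next
  case (snoc x g)
  let ?R = "concat (map (rev \<circ> \<phi>) g)" and ?Q = "concat (map \<phi> g)"
  have "reduce (concat (map (rev \<circ> \<phi>) (g @ [x])) @ [L]) = reduce (?R @ (rev (\<phi> x) @ [L]))" by simp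
  also have "\<dots> = reduce (?R @ reduce (rev (\<phi> x) @ [L]))" by (rule reduce_append_right)
  also have "\<dots> = reduce (?R @ reduce (L # \<phi> x))" by (simp add: h)
  also have "\<dots> = reduce ((?R @ [L]) @ \<phi> x)" using reduce_append_right[of ?R "L # \<phi> x"] by simp
  also have "\<dots> = reduce (reduce (?R @ [L]) @ \<phi> x)" by (rule reduce_append_left)
  also have "\<dots> = reduce (reduce (L # ?Q) @ \<phi> x)" using snoc.IH by (simp only:)
  also have "\<dots> = reduce (L # concat (map \<phi> (g @ [x])))"
    using reduce_append_left[of "L # ?Q" "\<phi> x"] by simp
  finally show ?case .
qed

lemma lam_pos_lt: "a < (l::'a::linorder) \<Longrightarrow> reduce ((True, l) # rev (lambda_letter l a)) = reduce (lambda_letter l a @ [(True, l)])"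
  by (simp add: lambda_letter_def fg_mult_def fg_inv_def gen_def cancels_def reduce_Cons)

lemma lam_pos_gt: "l < (a::'a::linorder) \<Longrightarrow> reduce ((True, l) # rev (lambda_letter l a)) = reduce (lambda_letter l a @ [(True, l)])"
  by (simp add: lambda_letter_def fg_mult_def fg_inv_def gen_def cancels_def reduce_Cons)

lemma lam_pos_eq: "reduce ((True, l) # rev (lambda_letter l l)) = reduce (lambda_letter l l @ [(True, l)])"
  by (simp add: lambda_letter_def fg_mult_def fg_inv_def gen_def cancels_def reduce_Cons)

lemma lam_pos: "reduce ((True, l) # rev (lambda_letter l a)) = reduce (lambda_letter l a @ [(True, l)])"
proof -
  consider "a < l" | "a = l" | "l < a" by fastforce
  then show ?thesis
  proof cases
    case 1 then show ?thesis by (rule lam_pos_lt)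
  next
    case 2 then show ?thesis using lam_pos_eq by simp
  next
    case 3 then show ?thesis by (rule lam_pos_gt)
  qed
qed

lemma lam_neg_lt: "a < (l::'a::linorder) \<Longrightarrow> reduce ((True, l) # rev (fg_inv (lambda_letter l a))) = reduce (fg_inv (lambda_letter l a) @ [(True, l)])"
  by (simp add: lambda_letter_def fg_mult_def fg_inv_def gen_def cancels_def reduce_Cons)

lemma lam_neg_gt: "l < (a::'a::linorder) \<Longrightarrow> reduce ((True, l) # rev (fg_inv (lambda_letter l a))) = reduce (fg_inv (lambda_letter l a) @ [(True, l)])"
  by (simp add: lambda_letter_def fg_mult_def fg_inv_def gen_def cancels_def reduce_Cons)

lemma lam_neg_eq: "reduce ((True, l) # rev (fg_inv (lambda_letter l l))) = reduce (fg_inv (lambda_letter l l) @ [(True, l)])"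
  by (simp add: lambda_letter_def fg_mult_def fg_inv_def gen_def cancels_def reduce_Cons)

lemma lam_neg: "reduce ((True, l) # rev (fg_inv (lambda_letter l a))) = reduce (fg_inv (lambda_letter l a) @ [(True, l)])"
proof -
  consider "a < l" | "a = l" | "l < a" by fastforce
  then show ?thesis
  proof cases
    case 1 then show ?thesis by (rule lam_neg_lt)
  next
    case 2 then show ?thesis using lam_neg_eq by simp
  next
    case 3 then show ?thesis by (rule lam_neg_gt)
  qed
qed

lemma rho_pos_lt: "a < (l::'a::linorder) \<Longrightarrow> reduce (rev (rho_letter l a) @ [(True, l)]) = reduce ((True, l) # rho_letter l a)"
  by (simp add: rho_letter_def fg_mult_def fg_inv_def gen_def cancels_def reduce_Cons)

lemma rho_pos_gt: "l < (a::'a::linorder) \<Longrightarrow> reduce (rev (rho_letter l a) @ [(True, l)]) = reduce ((True, l) # rho_letter l a)"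
  by (simp add: rho_letter_def fg_mult_def fg_inv_def gen_def cancels_def reduce_Cons)

lemma rho_pos_eq: "reduce (rev (rho_letter l l) @ [(True, l)]) = reduce ((True, l) # rho_letter l l)"
  by (simp add: rho_letter_def fg_mult_def fg_inv_def gen_def cancels_def reduce_Cons)

lemma rho_pos: "reduce (rev (rho_letter l a) @ [(True, l)]) = reduce ((True, l) # rho_letter l a)"
proof -
  consider "a < l" | "a = l" | "l < a" by fastforce
  then show ?thesis
  proof cases
    case 1 then show ?thesis by (rule rho_pos_lt)
  next
    case 2 then show ?thesis using rho_pos_eq by simp
  next
    case 3 then show ?thesis by (rule rho_pos_gt)
  qed
qed

lemma rho_neg_lt: "a < (l::'a::linorder) \<Longrightarrow> reduce (rev (fg_inv (rho_letter l a)) @ [(True, l)]) = reduce ((True, l) # fg_inv (rho_letter l a))"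
  by (simp add: rho_letter_def fg_mult_def fg_inv_def gen_def cancels_def reduce_Cons)

lemma rho_neg_gt: "l < (a::'a::linorder) \<Longrightarrow> reduce (rev (fg_inv (rho_letter l a)) @ [(True, l)]) = reduce ((True, l) # fg_inv (rho_letter l a))"
  by (simp add: rho_letter_def fg_mult_def fg_inv_def gen_def cancels_def reduce_Cons)

lemma rho_neg_eq: "reduce (rev (fg_inv (rho_letter l l)) @ [(True, l)]) = reduce ((True, l) # fg_inv (rho_letter l l))"
  by (simp add: rho_letter_def fg_mult_def fg_inv_def gen_def cancels_def reduce_Cons)

lemma rho_neg: "reduce (rev (fg_inv (rho_letter l a)) @ [(True, l)]) = reduce ((True, l) # fg_inv (rho_letter l a))"
proof -
  consider "a < l" | "a = l" | "l < a" by fastforce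
  then show ?thesis
  proof cases
    case 1 then show ?thesis by (rule rho_neg_lt)
  next
    case 2 then show ?thesis using rho_neg_eq by simp
  next
    case 3 then show ?thesis by (rule rho_neg_gt)
  qed
qed

lemma lam_letter:
  "reduce ((True, l) # rev ((\<lambda>(b, a). if b then lambda_letter l a else fg_inv (lambda_letter l a)) x))
   = reduce ((\<lambda>(b, a). if b then lambda_letter l a else fg_inv (lambda_letter l a)) x @ [(True, l)])"
proof (cases x)
  case (Pair b a) then show ?thesis by (cases b) (simp_all only: lam_pos lam_neg prod.case if_True if_False)
qed

lemma rho_let:
  "reduce (rev ((\<lambda>(b, a). if b then rho_letter l a else fg_inv (rho_letter l a)) x) @ [(True, l)])
   = reduce ((True, l) # (\<lambda>(b, a). if b then rho_letter l a else fg_inv (rho_letter l a)) x)"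
proof (cases x)
  case (Pair b a) then show ?thesis by (cases b) (simp_all only: rho_pos rho_neg prod.case if_True if_False)
qed

theorem lemma4p1:
  fixes l :: "'a::linorder" and g :: "'a letter list"
  assumes "reduced g" and "palindrome g"
  shows "palindrome (fg_mult (lambda_aut l g) (gen l))
       \<and> palindrome (fg_mult (gen l) (rho_aut l g))"
proof
  have rg: "rev g = g" using assms(2) by (simp add: palindrome_def reversal_def)
  let ?L = "(True, l)"
  have gf1: "rev (concat (map \<phi> g)) = concat (map (rev \<circ> \<phi>) g)"
    for \<phi> :: "'a letter \<Rightarrow> 'a letter list"
    by (simp add: rev_concat rev_map rg)
  have gf2: "extend_hom f g = reduce (concat (map (\<lambda>(b, a). if b then f a else fg_inv (f a)) g))"
    for f :: "'a \<Rightarrow> 'a letter list"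
    by (simp only: extend_hom_def)
  show "palindrome (fg_mult (lambda_aut l g) (gen l))"
  proof -
    let ?\<phi> = "(\<lambda>(b, a). if b then lambda_letter l a else fg_inv (lambda_letter l a))"
    let ?H = "concat (map ?\<phi> g)"
    have "fg_mult (lambda_aut l g) (gen l) = reduce (reduce ?H @ [?L])"
      by (simp only: gf2[of "lambda_letter l"] lambda_aut_def fg_mult_def gen_def)
    also have "\<dots> = reduce (?H @ [?L])" by (rule reduce_append_left[symmetric])
    finally have X: "fg_mult (lambda_aut l g) (gen l) = reduce (?H @ [?L])" .
    have "rev (reduce (?H @ [?L])) = reduce (?L # rev ?H)"
      by (simp add: reduce_rev[symmetric])
    also have "\<dots> = reduce (?H @ [?L])"
      using gf1[of ?\<phi>] induct_lam[of ?L ?\<phi> g, OF lam_letter] by simp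
    finally show ?thesis using X by (simp add: palindrome_def reversal_def)
  qed
  show "palindrome (fg_mult (gen l) (rho_aut l g))"
  proof -
    let ?\<phi> = "(\<lambda>(b, a). if b then rho_letter l a else fg_inv (rho_letter l a))"
    let ?H = "concat (map ?\<phi> g)"
    have "fg_mult (gen l) (rho_aut l g) = reduce ([?L] @ reduce ?H)"
      by (simp only: gf2[of "rho_letter l"] rho_aut_def fg_mult_def gen_def)
    also have "\<dots> = reduce ([?L] @ ?H)" by (rule reduce_append_right[symmetric])
    finally have X: "fg_mult (gen l) (rho_aut l g) = reduce (?L # ?H)" by simp
    have "rev (reduce (?L # ?H)) = reduce (rev ?H @ [?L])"
      by (simp add: reduce_rev[symmetric])
    also have "\<dots> = reduce (?L # ?H)"
      using gf1[of ?\<phi>] induct_rho[of ?\<phi> ?L g, OF rho_let] by simp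
    finally show ?thesis using X by (simp add: palindrome_def reversal_def)
  qed
qed

end
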